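(* Let $m$ be an odd positive integer and let $a,d_1,d_2\in\mathbb{Z}/m\mathbb{Z}$ be such that $d_1$, $d_2$ and $d_2-d_1$ are all invertible. Then the arithmetic triangle $\mathrm{AT}(a,d_1,d_2,n)$ is balanced for all non-negative integers $n\equiv0$ or $n\equiv-1\pmod m$.
   Context: The arithmetic triangle $\mathrm{AT}(a,d_1,d_2,n)$ is the family $(a+id_2+jd_1)_{(i,j)\in\mathbb{N}^2,\,i+j<n}$ of elements of $\mathbb{Z}/m\mathbb{Z}$. It is balanced if every element of $\mathbb{Z}/m\mathbb{Z}$ occurs the same number of times in it. *)

theory Defs
  imports Main "HOL-Number_Theory.Cong"
begin

text \<open>Elements of Z/mZ are represented by integers modulo m.
  The arithmetic triangle AT(a,d1,d2,n) is the family indexed by pairs (i,j) of naturals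
  with i + j < n, with value a + i*d2 + j*d1 (mod m).\<close>

definition AT_mult :: "nat \<Rightarrow> int \<Rightarrow> int \<Rightarrow> int \<Rightarrow> nat \<Rightarrow> int \<Rightarrow> nat" where
  "AT_mult m a d1 d2 n x =
     card {(i, j). (i::nat) + (j::nat) < n \<and> [a + int i * d2 + int j * d1 = x] (mod int m)}"

definition AT_balanced :: "nat \<Rightarrow> int \<Rightarrow> int \<Rightarrow> int \<Rightarrow> nat \<Rightarrow> bool" where
  "AT_balanced m a d1 d2 n \<longleftrightarrow>
     (\<forall>x\<in>{0..<int m}. \<forall>y\<in>{0..<int m}. AT_mult m a d1 d2 n x = AT_mult m a d1 d2 n y)"

end

theory Submission
  imports Defs
begin

lemma AT_cong:
  assumes "[x = y] (mod int m)"
  shows "AT_mult m a d1 d2 n x = AT_mult m a d1 d2 n y"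
proof -
  have "{(i, j). (i::nat) + (j::nat) < n \<and> [a + int i * d2 + int j * d1 = x] (mod int m)}
      = {(i, j). (i::nat) + (j::nat) < n \<and> [a + int i * d2 + int j * d1 = y] (mod int m)}"
    using assms by (auto intro: cong_trans cong_sym)
  then show ?thesis unfolding AT_mult_def by simp
qed

lemma fin_tri: "finite {(i, j). (i::nat) + (j::nat) < n \<and> Q i j}"
  by (rule finite_subset[of _ "{..<n} \<times> {..<n}"]) auto

lemma shift:
  "AT_mult m a d1 d2 n (x + d1 - d2) + card {j. j<n \<and> [a + int j*d1 = x] (mod int m)}
   = AT_mult m a d1 d2 n x + card {i. i<n \<and> [a + int i*d2 = x + d1 - d2] (mod int m)}"
proof -
  define R where "R = {(i, j). Suc ((i::nat) + (j::nat)) < n \<and> [a + int i*d2 + int j*d1 + d1 = x + d1 - d2] (mod int m)}"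
  define A where "A = {j. j<n \<and> [a + int j*d1 = x] (mod int m)}"
  define B where "B = {i. i<n \<and> [a + int i*d2 = x + d1 - d2] (mod int m)}"
  have finR: "finite R" unfolding R_def
    by (rule finite_subset[of _ "{..<n} \<times> {..<n}"]) auto
  have finA: "finite A" unfolding A_def by auto
  have finB: "finite B" unfolding B_def by auto
  have e1: "{(i, j). (i::nat) + (j::nat) < n \<and> [a + int i * d2 + int j * d1 = x + d1 - d2] (mod int m)}
     = (\<lambda>i. (i, 0)) ` B \<union> (\<lambda>(i, j). (i, Suc j)) ` R"
  proof (rule set_eqI, clarify)
    fix i j :: nat
    show "((i, j) \<in> {(i, j). i + j < n \<and> [a + int i * d2 + int j * d1 = x + d1 - d2] (mod int m)}) =
          ((i, j) \<in> (\<lambda>i. (i, 0)) ` B \<union> (\<lambda>(i, j). (i, Suc j)) ` R)"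
    proof (cases j)
      case 0 then show ?thesis unfolding B_def R_def by auto
    next
      case (Suc k)
      have "[a + int i * d2 + int j * d1 = x + d1 - d2] (mod int m) \<longleftrightarrow>
            [a + int i*d2 + int k*d1 + d1 = x + d1 - d2] (mod int m)"
        using Suc by (simp add: algebra_simps)
      then show ?thesis using Suc unfolding B_def R_def by auto
    qed
  qed
  have e2: "{(i, j). (i::nat) + (j::nat) < n \<and> [a + int i * d2 + int j * d1 = x] (mod int m)}
     = (\<lambda>j. (0, j)) ` A \<union> (\<lambda>(i, j). (Suc i, j)) ` R"
  proof (rule set_eqI, clarify)
    fix i j :: nat
    show "((i, j) \<in> {(i, j). i + j < n \<and> [a + int i * d2 + int j * d1 = x] (mod int m)}) =
          ((i, j) \<in> (\<lambda>j. (0, j)) ` A \<union> (\<lambda>(i, j). (Suc i, j)) ` R)"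
    proof (cases i)
      case 0 then show ?thesis unfolding A_def R_def by auto
    next
      case (Suc k)
      have "[a + int i * d2 + int j * d1 = x] (mod int m) \<longleftrightarrow>
            [a + int k*d2 + int j*d1 + d1 = x + d1 - d2] (mod int m)"
        using Suc by (simp add: cong_iff_dvd_diff algebra_simps)
      then show ?thesis using Suc unfolding A_def R_def by auto
    qed
  qed
  have c1: "card ((\<lambda>i. (i, 0::nat)) ` B \<union> (\<lambda>(i, j). (i, Suc j)) ` R) = card B + card R"
  proof -
    have "inj_on (\<lambda>(i::nat, j::nat). (i, Suc j)) R" by (auto simp: inj_on_def)
    then have "card ((\<lambda>(i, j). (i, Suc j)) ` R) = card R" by (rule card_image)
    then show ?thesis
      by (subst card_Un_disjoint) (auto simp: finB finR card_image inj_on_def)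
  qed
  have c2: "card ((\<lambda>j. (0::nat, j)) ` A \<union> (\<lambda>(i, j). (Suc i, j)) ` R) = card A + card R"
  proof -
    have "inj_on (\<lambda>(i::nat, j::nat). (Suc i, j)) R" by (auto simp: inj_on_def)
    then have "card ((\<lambda>(i, j). (Suc i, j)) ` R) = card R" by (rule card_image)
    then show ?thesis
      by (subst card_Un_disjoint) (auto simp: finA finR card_image inj_on_def)
  qed
  show ?thesis unfolding AT_mult_def
    using c1 c2 e1 e2 unfolding A_def B_def by simp
qed


lemma solve_lin:
  assumes "m > 0" "coprime d (int m)"
  shows "\<exists>t<m. [b + int t * d = y] (mod int m)"
proof -
  obtain e where e: "[d * e = 1] (mod int m)" using cong_solve_coprime_int assms(2) by blast
  define t0 where "t0 = nat ((y - b) * e mod int m)"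
  have t0lt: "t0 < m" using assms(1) unfolding t0_def
    by (simp add: nat_less_iff)
  have "int t0 = (y - b) * e mod int m" using assms(1) unfolding t0_def by simp
  then have 1: "[int t0 = (y - b) * e] (mod int m)" by (simp add: cong_def)
  have 2: "[int t0 * d = (y - b) * e * d] (mod int m)" using 1 by (rule cong_scalar_right)
  have 3: "[(y - b) * (d * e) = (y - b) * 1] (mod int m)" using e by (rule cong_scalar_left)
  have "[int t0 * d = y - b] (mod int m)" using cong_trans[OF 2] 3 by (simp add: ac_simps)
  then have "[b + int t0 * d = b + (y - b)] (mod int m)" by (rule cong_add_lcancel[THEN iffD2])
  then show ?thesis using t0lt by auto
qed

lemma one_sol:
  assumes "m > 0" "coprime d (int m)"
  shows "card {t. t < m \<and> [b + int t * d = y] (mod int m)} = 1"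
proof -
  obtain t0 where t0: "t0 < m" "[b + int t0 * d = y] (mod int m)" using solve_lin[OF assms] by blast
  have "{t. t < m \<and> [b + int t * d = y] (mod int m)} = {t0}"
  proof (rule set_eqI, rule iffI)
    fix t assume "t \<in> {t. t < m \<and> [b + int t * d = y] (mod int m)}"
    then have t: "t < m" "[b + int t * d = y] (mod int m)" by auto
    have "[b + int t * d = b + int t0 * d] (mod int m)" using t(2) t0(2) by (meson cong_sym cong_trans)
    then have "[int t * d = int t0 * d] (mod int m)" by (rule cong_add_lcancel[THEN iffD1])
    then have "[int t = int t0] (mod int m)" using cong_mult_rcancel assms(2) by blast
    then have "[t = t0] (mod m)" by (simp add: cong_int_iff)
    then have "t = t0" using t(1) t0(1) cong_less_modulus_unique_nat by blast
    then show "t \<in> {t0}" by simp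
  qed (use t0 in auto)
  then show ?thesis by simp
qed

lemma L_mult:
  assumes "m > 0" "coprime d (int m)"
  shows "card {j. j < k * m \<and> [b + int j * d = y] (mod int m)} = k"
proof (induction k)
  case 0 then show ?case by simp
next
  case (Suc k)
  let ?P = "\<lambda>j. [b + int j * d = y] (mod int m)"
  let ?Q = "\<lambda>t. [(b + int (k*m) * d) + int t * d = y] (mod int m)"
  have eq: "{j. j < Suc k * m \<and> ?P j} = {j. j < k * m \<and> ?P j} \<union> (\<lambda>t. k*m + t) ` {t. t < m \<and> ?Q t}"
  proof (rule set_eqI, rule iffI)
    fix j assume j: "j \<in> {j. j < Suc k * m \<and> ?P j}"
    show "j \<in> {j. j < k * m \<and> ?P j} \<union> (\<lambda>t. k*m + t) ` {t. t < m \<and> ?Q t}"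
    proof (cases "j < k * m")
      case True then show ?thesis using j by auto
    next
      case False
      then have "j = k*m + (j - k*m)" "j - k*m < m" using j by auto
      moreover have "?Q (j - k*m)" using j \<open>j = k*m + (j - k*m)\<close>
        by (metis (no_types, lifting) add.assoc distrib_right mem_Collect_eq of_nat_add)
      ultimately show ?thesis by blast
    qed
  next
    fix j assume "j \<in> {j. j < k * m \<and> ?P j} \<union> (\<lambda>t. k*m + t) ` {t. t < m \<and> ?Q t}"
    then show "j \<in> {j. j < Suc k * m \<and> ?P j}"
      by (auto simp: distrib_right add.assoc)
  qed
  have "card ({j. j < k * m \<and> ?P j} \<union> (\<lambda>t. k*m + t) ` {t. t < m \<and> ?Q t})
      = card {j. j < k * m \<and> ?P j} + card ((\<lambda>t. k*m + t) ` {t. t < m \<and> ?Q t})"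
    by (rule card_Un_disjoint) auto
  also have "card ((\<lambda>t. k*m + t) ` {t. t < m \<and> ?Q t}) = card {t. t < m \<and> ?Q t}"
    by (rule card_image) (auto simp: inj_on_def)
  also have "\<dots> = 1" by (rule one_sol[OF assms])
  finally show ?case using eq Suc.IH by simp
qed

lemma L_suc:
  "card {j. j < Suc n \<and> P j} = card {j. j < n \<and> P j} + (if P n then 1 else 0)"
proof -
  have "{j. j < Suc n \<and> P j} = {j. j < n \<and> P j} \<union> (if P n then {n} else {})"
    by (auto simp: less_Suc_eq)
  then show ?thesis by auto
qed

theorem theorem14:
  fixes m :: nat and a d1 d2 :: int and n :: nat
  assumes "odd m" and "m > 0"
    and "coprime d1 (int m)" and "coprime d2 (int m)" and "coprime (d2 - d1) (int m)"
    and "[int n = 0] (mod int m) \<or> [int n = -1] (mod int m)"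
  shows "AT_balanced m a d1 d2 n"
proof -
  define D where "D = d1 - d2"
  have cD: "coprime D (int m)" unfolding D_def
    using assms(5) by (metis coprime_minus_left_iff minus_diff_eq)
  have rows: "card {j. j<n \<and> [a + int j*d1 = x] (mod int m)}
     = card {i. i<n \<and> [a + int i*d2 = x + d1 - d2] (mod int m)}" for x
    using assms(6)
  proof
    assume "[int n = 0] (mod int m)"
    then have "m dvd n" by (simp add: cong_0_iff)
    then obtain k where "n = k * m" by (metis dvd_def mult.commute)
    then show ?thesis using L_mult[OF assms(2) assms(3)] L_mult[OF assms(2) assms(4)] by simp
  next
    assume h: "[int n = -1] (mod int m)"
    then have "int m dvd int n + 1" by (simp add: cong_iff_dvd_diff)
    then have "m dvd Suc n" by (metis of_nat_Suc add.commute of_nat_dvd_iff)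
    then obtain k where k: "Suc n = k * m" by (metis dvd_def mult.commute)
    have dv: "int m dvd (int n + 1) * (d1 - d2)" using \<open>int m dvd int n + 1\<close> by simp
    have "(a + int n * d1 - x) = (int n + 1) * (d1 - d2) + (a + int n * d2 - (x + d1 - d2))"
      by (simp add: algebra_simps)
    then have "[a + int n*d1 = x] (mod int m) \<longleftrightarrow> [a + int n*d2 = x + d1 - d2] (mod int m)"
      unfolding cong_iff_dvd_diff using dvd_add_right_iff[OF dv] by metis
    then show ?thesis
      using L_mult[OF assms(2) assms(3), of k a x] L_mult[OF assms(2) assms(4), of k a "x + d1 - d2"]
        L_suc[of n "\<lambda>j. [a + int j*d1 = x] (mod int m)"]
        L_suc[of n "\<lambda>j. [a + int j*d2 = x + d1 - d2] (mod int m)"] k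
      by (simp split: if_splits)
  qed
  have step: "AT_mult m a d1 d2 n (x + D) = AT_mult m a d1 d2 n x" for x
    using shift[of m a d1 d2 n x] rows[of x] unfolding D_def by (simp add: algebra_simps)
  have iter: "AT_mult m a d1 d2 n (x + int t * D) = AT_mult m a d1 d2 n x" for x t
  proof (induction t)
    case 0 then show ?case by simp
  next
    case (Suc t)
    have "x + int (Suc t) * D = (x + int t * D) + D" by (simp add: algebra_simps)
    then show ?case using step[of "x + int t * D"] Suc.IH by (simp only:)
  qed
  show ?thesis unfolding AT_balanced_def
  proof (intro ballI)
    fix x y assume "x \<in> {0..<int m}" "y \<in> {0..<int m}"
    obtain t where "[x + int t * D = y] (mod int m)" using solve_lin[OF assms(2) cD] by blast
    then have "AT_mult m a d1 d2 n (x + int t * D) = AT_mult m a d1 d2 n y" by (rule AT_cong)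
    then show "AT_mult m a d1 d2 n x = AT_mult m a d1 d2 n y" using iter by simp
  qed
qed

end
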